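(* Let $P$ be a set of $n$ points in $\mathbb{R}^3$ lying above the $xy$-plane, let $c$ be a centerpoint of $P$, and let $T=\binom{P}{3}$ be the set of all triangles with vertices in $P$. Then for any point $r$ on the $xy$-plane, the segment $cr$ intersects at least $\Omega(n^3)$ triangles of $T$ (with an absolute constant in the $\Omega$).
   Context: A centerpoint of a finite set $P\subset\mathbb{R}^3$ is a point $c\in\mathbb{R}^3$ such that every closed halfspace containing $c$ contains at least $|P|/4$ points of $P$. *)

theory Defs
  imports "HOL-Analysis.Analysis"
begin

definition centerpoint :: "(real^3) set \<Rightarrow> real^3 \<Rightarrow> bool" where
  "centerpoint P c \<longleftrightarrow>
     (\<forall>a b. a \<noteq> 0 \<longrightarrow> a \<bullet> c \<le> b \<longrightarrow>
        real (card {p \<in> P. a \<bullet> p \<le> b}) \<ge> real (card P) / 4)"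

text \<open>Triangles with vertices in P: the 3-element subsets of P (the triangle
  is the convex hull of its vertex set).\<close>
definition triangles :: "(real^3) set \<Rightarrow> (real^3) set set" where
  "triangles P = {S. S \<subseteq> P \<and> card S = 3}"

end

theory Submission
  imports Defs
begin

lemma convex_upper: "convex {x::real^3. 0 < x$3}"
proof -
  have "{x::real^3. 0 < x$3} = {x. inner (axis 3 1) x > 0}"
    by (auto simp: inner_axis')
  then show ?thesis by (simp add: convex_halfspace_gt)
qed

lemma seg_push:
  fixes c r :: "real^3" and K :: "(real^3) set"
  assumes yK: "c + t0 *\<^sub>R (r - c) \<in> interior K" and t01: "0 \<le> t0" "t0 < 1" and rc: "r \<noteq> c"
  shows "\<exists>t1. t0 < t1 \<and> t1 \<le> 1 \<and> c + t1 *\<^sub>R (r - c) \<in> K"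
proof -
  define g where "g t = c + t *\<^sub>R (r - c)" for t :: real
  obtain e where e: "e > 0" "ball (g t0) e \<subseteq> K" using yK unfolding mem_interior g_def by blast
  define t1 where "t1 = min 1 (t0 + e / (2 * norm (r - c)))"
  have nrc: "norm (r - c) > 0" using rc by simp
  have t1: "t0 < t1" "t1 \<le> 1" using t01 e nrc unfolding t1_def by auto
  have d: "dist (g t0) (g t1) = norm (g t1 - g t0)" by (simp add: dist_norm norm_minus_commute)
  have "g t1 - g t0 = (t1 - t0) *\<^sub>R (r - c)" unfolding g_def by (simp add: algebra_simps)
  then have "dist (g t0) (g t1) = (t1 - t0) * norm (r - c)"
    using t1 d by simp
  also have "\<dots> \<le> (e / (2 * norm (r - c))) * norm (r - c)"
    using nrc t1 unfolding t1_def by (intro mult_right_mono) auto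
  also have "\<dots> < e" using nrc e by simp
  finally have "g t1 \<in> K" using e by auto
  then show ?thesis using t1 unfolding g_def by auto
qed

lemma tri_exists:
  fixes M :: "(real^3) set" and c r :: "real^3"
  assumes fin: "finite M" and c3: "3 \<le> card M" and cM: "c \<in> convex hull M"
    and up: "\<forall>p\<in>M. p$3 > 0" and r0: "r$3 = 0"
  shows "\<exists>T. T \<subseteq> M \<and> card T = 3 \<and> convex hull T \<inter> closed_segment c r \<noteq> {}"
proof -
  obtain S where S: "finite S" "S \<subseteq> M" "card S \<le> 4" "c \<in> convex hull S"
    using cM caratheodory[of M] by auto
  have KU: "convex hull M \<subseteq> {x. 0 < x$3}"
    using up by (intro hull_minimal convex_upper) auto
  show ?thesis
  proof (cases "card S \<le> 3")
    case True
    have "3 - card S \<le> card (M - S)" using S c3 fin by (simp add: card_Diff_subset)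
    then obtain T' where T': "T' \<subseteq> M - S" "card T' = 3 - card S" "finite T'"
      by (rule obtain_subset_with_card_n)
    have "card (S \<union> T') = 3" using T' S True by (subst card_Un_disjoint) auto
    moreover have "c \<in> convex hull (S \<union> T')" using S hull_mono[of S "S \<union> T'"] by auto
    ultimately show ?thesis using S T' by (intro exI[of _ "S \<union> T'"]) auto
  next
    case False
    then have c4: "card S = Suc (DIM(real^3))" using S by simp
    define K where "K = convex hull S"
    have cK: "compact K" unfolding K_def using S by (simp add: finite_imp_compact_convex_hull)
    have KU': "K \<subseteq> {x. 0 < x$3}" using KU S hull_mono[of S M] unfolding K_def by auto
    define g where "g t = c + t *\<^sub>R (r - c)" for t :: real
    define A where "A = {0..1} \<inter> g -` K"
    have contg: "continuous_on UNIV g" unfolding g_def by (intro continuous_intros)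
    have "closed (g -` K)"
      by (intro closed_vimage compact_imp_closed cK) (simp add: g_def continuous_intros)
    then have "compact A" unfolding A_def by (intro compact_Int_closed) auto
    moreover have "0 \<in> A" using S unfolding A_def g_def K_def by auto
    ultimately obtain t0 where t0: "t0 \<in> A" "\<And>t. t \<in> A \<Longrightarrow> t \<le> t0"
      using compact_attains_sup[of A] by blast
    have rc: "r \<noteq> c" using KU cM r0 by auto
    have "g 1 \<notin> K" using KU' r0 unfolding g_def by auto
    then have t01: "0 \<le> t0" "t0 < 1" using t0(1) unfolding A_def by (auto simp: less_le)
    have yK: "g t0 \<in> K" using t0(1) unfolding A_def by auto
    have "g t0 \<notin> interior K"
    proof
      assume "g t0 \<in> interior K"
      then obtain t1 where "t0 < t1" "t1 \<le> 1" "g t1 \<in> K"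
        using seg_push[of c t0 r K] t01 rc unfolding g_def by blast
      then have "t1 \<in> A" using t01 unfolding A_def by auto
      then show False using t0(2) \<open>t0 < t1\<close> by force
    qed
    then have "g t0 \<in> frontier K" using yK cK
      by (simp add: frontier_def compact_imp_closed closure_closed)
    then obtain a where a: "a \<in> S" "g t0 \<in> convex hull (S - {a})"
      using frontier_of_convex_hull[OF c4] unfolding K_def by auto
    have "g t0 \<in> closed_segment c r"
      unfolding in_segment g_def using t01 by (intro exI[of _ t0]) (auto simp: algebra_simps)
    moreover have "card (S - {a}) = 3" using a False S by auto
    ultimately show ?thesis using a S by (intro exI[of _ "S - {a}"]) auto
  qed
qed

definition shatters :: "'a set set \<Rightarrow> 'a set \<Rightarrow> bool" where
  "shatters F S \<longleftrightarrow> (\<forall>T \<subseteq> S. \<exists>A \<in> F. A \<inter> S = T)"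

lemma pajor:
  assumes "finite X" "F \<subseteq> Pow X"
  shows "card F \<le> card {S. S \<subseteq> X \<and> shatters F S}"
  using assms
proof (induction X arbitrary: F rule: finite_induct)
  case empty
  then have "F \<subseteq> {{}}" by auto
  then show ?case
  proof (cases "F = {}")
    case True then show ?thesis by simp
  next
    case False
    with \<open>F \<subseteq> {{}}\<close> have "F = {{}}" by auto
    then have "{S. S \<subseteq> {} \<and> shatters F S} = {{}}" by (auto simp: shatters_def)
    then show ?thesis using \<open>F = {{}}\<close> by simp
  qed
next
  case (insert x X)
  define F0 where "F0 = {A \<in> F. x \<notin> A}"
  define F1 where "F1 = (\<lambda>A. A - {x}) ` {A \<in> F. x \<in> A}"
  have finF: "finite F" using insert.prems insert.hyps(1) by (meson finite_Pow_iff finite_insert rev_finite_subset)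
  have F0s: "F0 \<subseteq> Pow X" using insert.prems unfolding F0_def by auto
  have F1s: "F1 \<subseteq> Pow X" using insert.prems unfolding F1_def by auto
  have inj: "inj_on (\<lambda>A. A - {x}) {A \<in> F. x \<in> A}"
    by (intro inj_onI) (metis insert_Diff mem_Collect_eq)
  have "F = F0 \<union> {A \<in> F. x \<in> A}" unfolding F0_def by auto
  then have "card F = card F0 + card {A \<in> F. x \<in> A}"
    using finF by (metis (no_types, lifting) F0_def card_Un_disjoint disjoint_iff finite_Un mem_Collect_eq)
  also have "card {A \<in> F. x \<in> A} = card F1" unfolding F1_def using card_image[OF inj] by simp
  finally have cF: "card F = card F0 + card F1" .
  define Sh0 where "Sh0 = {S. S \<subseteq> X \<and> shatters F0 S}"
  define Sh1 where "Sh1 = {S. S \<subseteq> X \<and> shatters F1 S}"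
  define Sh where "Sh = {S. S \<subseteq> insert x X \<and> shatters F S}"
  have i0: "card F0 \<le> card Sh0" unfolding Sh0_def using insert.IH[OF F0s] .
  have i1: "card F1 \<le> card Sh1" unfolding Sh1_def using insert.IH[OF F1s] .
  have finX: "finite (Pow (insert x X))" using insert.hyps by simp
  have sub1: "Sh0 \<union> Sh1 \<subseteq> Sh"
  proof
    fix S assume "S \<in> Sh0 \<union> Sh1"
    then have SX: "S \<subseteq> X" unfolding Sh0_def Sh1_def by auto
    then have xS: "x \<notin> S" using insert.hyps by auto
    show "S \<in> Sh"
    proof (cases "S \<in> Sh0")
      case True
      then show ?thesis unfolding Sh0_def Sh_def shatters_def F0_def by blast
    next
      case False
      with \<open>S \<in> Sh0 \<union> Sh1\<close> have "shatters F1 S" unfolding Sh1_def by auto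
      have "shatters F S" unfolding shatters_def
      proof (intro allI impI)
        fix T assume "T \<subseteq> S"
        then obtain B where "B \<in> F1" "B \<inter> S = T" using \<open>shatters F1 S\<close> unfolding shatters_def by blast
        then obtain A where "A \<in> F" "B = A - {x}" unfolding F1_def by auto
        then have "A \<inter> S = T" using \<open>B \<inter> S = T\<close> xS by auto
        then show "\<exists>A\<in>F. A \<inter> S = T" using \<open>A \<in> F\<close> by blast
      qed
      then show ?thesis using SX unfolding Sh_def by auto
    qed
  qed
  have sub2: "insert x ` (Sh0 \<inter> Sh1) \<subseteq> Sh"
  proof
    fix S' assume "S' \<in> insert x ` (Sh0 \<inter> Sh1)"
    then obtain S where S: "S' = insert x S" "S \<in> Sh0" "S \<in> Sh1" by auto
    then have SX: "S \<subseteq> X" unfolding Sh0_def by auto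
    then have xS: "x \<notin> S" using insert.hyps by auto
    have "shatters F S'" unfolding shatters_def
    proof (intro allI impI)
      fix T assume T: "T \<subseteq> S'"
      show "\<exists>A\<in>F. A \<inter> S' = T"
      proof (cases "x \<in> T")
        case True
        have "T - {x} \<subseteq> S" using T S(1) by auto
        then obtain B where "B \<in> F1" "B \<inter> S = T - {x}" using S(3) unfolding Sh1_def shatters_def by blast
        then obtain A where A: "A \<in> F" "x \<in> A" "B = A - {x}" unfolding F1_def by auto
        then have "A \<inter> S' = T" using \<open>B \<inter> S = T - {x}\<close> xS S(1) True by auto
        then show ?thesis using A by blast
      next
        case False
        have "T \<subseteq> S" using T S(1) False by auto
        then obtain A where A: "A \<in> F0" "A \<inter> S = T" using S(2) unfolding Sh0_def shatters_def by blast
        then have "A \<inter> S' = T" using S(1) unfolding F0_def by auto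
        then show ?thesis using A unfolding F0_def by blast
      qed
    qed
    then show "S' \<in> Sh" using SX S(1) unfolding Sh_def by auto
  qed
  have disj: "(Sh0 \<union> Sh1) \<inter> insert x ` (Sh0 \<inter> Sh1) = {}"
    using insert.hyps unfolding Sh0_def Sh1_def by auto
  have finSh: "finite Sh" unfolding Sh_def using finX by (auto intro: rev_finite_subset)
  have fin01: "finite Sh0" "finite Sh1" unfolding Sh0_def Sh1_def using insert.hyps by auto
  have "card Sh0 + card Sh1 = card (Sh0 \<union> Sh1) + card (Sh0 \<inter> Sh1)"
    using fin01 card_Un_Int by blast
  also have "card (Sh0 \<inter> Sh1) = card (insert x ` (Sh0 \<inter> Sh1))"
  proof -
    have "inj_on (insert x) (Sh0 \<inter> Sh1)"
      using insert.hyps unfolding Sh0_def by (intro inj_onI) (metis Diff_insert_absorb IntD1 mem_Collect_eq subsetD)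
    then show ?thesis by (simp add: card_image)
  qed
  also have "card (Sh0 \<union> Sh1) + card (insert x ` (Sh0 \<inter> Sh1)) = card ((Sh0 \<union> Sh1) \<union> insert x ` (Sh0 \<inter> Sh1))"
    using disj fin01 by (intro card_Un_disjoint[symmetric]) auto
  also have "\<dots> \<le> card Sh" using sub1 sub2 finSh by (intro card_mono) auto
  finally show ?case using cF i0 i1 unfolding Sh_def by simp
qed

lemma card_small_subsets:
  assumes "finite X"
  shows "card {S. S \<subseteq> X \<and> card S \<le> d} \<le> (card X + 1) ^ d"
proof -
  define D where "D = PiE {..<d} (\<lambda>_. insert None (Some ` X))"
  define h where "h f = {x. Some x \<in> f ` {..<d}}" for f :: "nat \<Rightarrow> 'a option"
  have "{S. S \<subseteq> X \<and> card S \<le> d} \<subseteq> h ` D"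
  proof
    fix S assume S: "S \<in> {S. S \<subseteq> X \<and> card S \<le> d}"
    then have fS: "finite S" using assms finite_subset by auto
    obtain b where b: "bij_betw b {0..<card S} S" using ex_bij_betw_nat_finite[OF fS] by blast
    define f where "f i = (if i < d then (if i < card S then Some (b i) else None) else undefined)" for i
    have bX: "\<forall>i < card S. b i \<in> X" using b S by (auto simp: bij_betw_def)
    have "f \<in> D" unfolding D_def PiE_iff extensional_def using bX by (auto simp: f_def)
    moreover have "h f = S"
    proof -
      have "h f = b ` {0..<card S}" unfolding h_def f_def using S by (auto split: if_splits)
      then show ?thesis using b by (simp add: bij_betw_def)
    qed
    ultimately show "S \<in> h ` D" by blast
  qed
  then have "card {S. S \<subseteq> X \<and> card S \<le> d} \<le> card (h ` D)"
    by (intro card_mono) (auto simp: D_def assms finite_PiE)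
  also have "\<dots> \<le> card D" by (rule card_image_le) (auto simp: D_def assms finite_PiE)
  also have "card D = (card X + 1) ^ d"
    unfolding D_def using assms by (simp add: card_PiE card_image)
  finally show ?thesis .
qed

definition traces :: "(real^3) set \<Rightarrow> real^3 \<Rightarrow> (real^3) set set" where
  "traces Q c = {R. \<exists>a. a \<noteq> 0 \<and> R = {p \<in> Q. inner a p > inner a c}}"

lemma shatters_subset: "shatters F S \<Longrightarrow> S' \<subseteq> S \<Longrightarrow> shatters F S'"
proof -
  assume sh: "shatters F S" and sub: "S' \<subseteq> S"
  show "shatters F S'" unfolding shatters_def
  proof (intro allI impI)
    fix T assume "T \<subseteq> S'"
    then have "T \<subseteq> S" using sub by auto
    then obtain A where "A \<in> F" "A \<inter> S = T" using sh unfolding shatters_def by blast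
    then have "A \<inter> S' = T" using sub \<open>T \<subseteq> S'\<close> by auto
    then show "\<exists>A\<in>F. A \<inter> S' = T" using \<open>A \<in> F\<close> by blast
  qed
qed

lemma traces_shatter_le4:
  assumes "finite Q" "S \<subseteq> Q" "shatters (traces Q c) S"
  shows "card S \<le> 4"
proof (rule ccontr)
  assume "\<not> card S \<le> 4"
  then have "5 \<le> card S" by simp
  then obtain S' where S': "S' \<subseteq> S" "card S' = 5" "finite S'" by (rule obtain_subset_with_card_n)
  have sh: "shatters (traces Q c) S'" using shatters_subset[OF assms(3) S'(1)] .
  have "affine_dependent S'" using S' by (intro affine_dependent_biggerset) auto
  then obtain M N where MN: "M \<inter> N = {}" "M \<union> N = S'" "convex hull M \<inter> convex hull N \<noteq> {}"
    using Radon_partition[OF S'(3)] by blast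
  then obtain A where A: "A \<in> traces Q c" "A \<inter> S' = M" using sh unfolding shatters_def by blast
  then obtain a where a: "A = {p \<in> Q. inner a p > inner a c}" unfolding traces_def by blast
  have "M \<subseteq> {x. inner a x > inner a c}" using A(2) a by auto
  then have hM: "convex hull M \<subseteq> {x. inner a x > inner a c}"
    by (intro hull_minimal convex_halfspace_gt)
  have "N \<subseteq> {x. inner a x \<le> inner a c}"
  proof
    fix p assume "p \<in> N"
    then have "p \<in> S'" "p \<notin> M" using MN by auto
    then have "p \<in> Q" "p \<notin> A" using A(2) S' assms(2) by auto
    then show "p \<in> {x. inner a x \<le> inner a c}" using a by auto
  qed
  then have hN: "convex hull N \<subseteq> {x. inner a x \<le> inner a c}"
    by (intro hull_minimal convex_halfspace_le)
  obtain z where "z \<in> convex hull M" "z \<in> convex hull N" using MN(3) by blast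
  then have "inner a z > inner a c" "inner a z \<le> inner a c" using hM hN by auto
  then show False by simp
qed

lemma card_traces:
  assumes "finite Q"
  shows "card (traces Q c) \<le> (card Q + 1) ^ 4"
proof -
  have "traces Q c \<subseteq> Pow Q" unfolding traces_def by auto
  then have "card (traces Q c) \<le> card {S. S \<subseteq> Q \<and> shatters (traces Q c) S}"
    using pajor assms by blast
  also have "\<dots> \<le> card {S. S \<subseteq> Q \<and> card S \<le> 4}"
    using traces_shatter_le4[OF assms] assms by (intro card_mono) auto
  also have "\<dots> \<le> (card Q + 1) ^ 4" using card_small_subsets[OF assms] .
  finally show ?thesis .
qed

lemma card_PiE_restrict:
  assumes "finite I" "J \<subseteq> I" "H \<subseteq> P"
  shows "card {y \<in> PiE I (\<lambda>_. P). \<forall>k\<in>J. y k \<in> H} = card H ^ card J * card P ^ (card I - card J)"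
proof -
  have "{y \<in> PiE I (\<lambda>_. P). \<forall>k\<in>J. y k \<in> H} = PiE I (\<lambda>k. if k \<in> J then H else P)"
    using assms by (auto simp: PiE_iff extensional_def split: if_splits; blast)
  then have "card {y \<in> PiE I (\<lambda>_. P). \<forall>k\<in>J. y k \<in> H} = (\<Prod>k\<in>I. card (if k \<in> J then H else P))"
    using assms by (simp add: card_PiE)
  also have "\<dots> = (\<Prod>k\<in>I. if k \<in> J then card H else card P)" by (intro prod.cong) auto
  also have "\<dots> = card H ^ card (I \<inter> {k. k \<in> J}) * card P ^ card (I \<inter> - {k. k \<in> J})"
    using assms by (simp add: prod.If_cases)
  also have "I \<inter> {k. k \<in> J} = J" using assms by auto
  also have "I \<inter> - {k. k \<in> J} = I - J" by auto
  also have "card (I - J) = card I - card J" using assms by (simp add: card_Diff_subset finite_subset)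
  finally show ?thesis .
qed

lemma variance_count:
  fixes P H :: "'a set" and m :: nat
  assumes finP: "finite P" and HP: "H \<subseteq> P" and ne: "P \<noteq> {}"
  defines "\<Omega> \<equiv> PiE {..<m} (\<lambda>_. P)"
  defines "(p::real) \<equiv> real (card H) / real (card P)"
  shows "(\<Sum>y\<in>\<Omega>. (real (card {j\<in>{..<m}. y j \<in> H}) - real m * p)^2)
          = real (card P) ^ m * real m * p * (1 - p)"
proof -
  define n where "n = real (card P)"
  have n0: "n > 0" using finP ne unfolding n_def by (simp add: card_gt_0_iff)
  have finO: "finite \<Omega>" unfolding \<Omega>_def using finP by (simp add: finite_PiE)
  have cO: "card \<Omega> = card P ^ m" unfolding \<Omega>_def using finP by (simp add: card_PiE)
  define ind where "ind j y = (of_bool (y j \<in> H) :: real)" for j :: nat and y :: "nat \<Rightarrow> 'a"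
  have X: "real (card {j\<in>{..<m}. y j \<in> H}) = (\<Sum>j<m. ind j y)" for y
  proof -
    have "(\<Sum>j<m. ind j y) = real (card ({..<m} \<inter> {j. y j \<in> H}))" unfolding ind_def by simp
    also have "{..<m} \<inter> {j. y j \<in> H} = {j\<in>{..<m}. y j \<in> H}" by auto
    finally show ?thesis by simp
  qed
  have S1: "(\<Sum>y\<in>\<Omega>. ind j y) = n ^ m * p" if "j < m" for j
  proof -
    have "(\<Sum>y\<in>\<Omega>. ind j y) = real (card (\<Omega> \<inter> {y. y j \<in> H}))" unfolding ind_def using finO by simp
    also have "\<Omega> \<inter> {y. y j \<in> H} = {y \<in> PiE {..<m} (\<lambda>_. P). \<forall>k\<in>{j}. y k \<in> H}" unfolding \<Omega>_def by auto
    also have "card \<dots> = card H ^ 1 * card P ^ (m - 1)"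
      using card_PiE_restrict[of "{..<m}" "{j}" H P] that HP by simp
    also have "real (card H ^ 1 * card P ^ (m - 1)) = n ^ m * p"
    proof -
      have "n ^ m = n * n ^ (m - 1)" using that by (cases m) auto
      then show ?thesis unfolding p_def n_def using n0 n_def by (simp add: field_simps)
    qed
    finally show ?thesis .
  qed
  have S2: "(\<Sum>y\<in>\<Omega>. ind j y * ind l y) = n ^ m * p^2" if "j < m" "l < m" "j \<noteq> l" for j l
  proof -
    have "(\<Sum>y\<in>\<Omega>. ind j y * ind l y) = (\<Sum>y\<in>\<Omega>. of_bool (y j \<in> H \<and> y l \<in> H))"
      unfolding ind_def by (intro sum.cong) auto
    also have "\<dots> = real (card (\<Omega> \<inter> {y. y j \<in> H \<and> y l \<in> H}))" using finO by simp
    also have "\<Omega> \<inter> {y. y j \<in> H \<and> y l \<in> H} = {y \<in> PiE {..<m} (\<lambda>_. P). \<forall>k\<in>{j,l}. y k \<in> H}" unfolding \<Omega>_def by auto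
    also have "card \<dots> = card H ^ 2 * card P ^ (m - 2)"
      using card_PiE_restrict[of "{..<m}" "{j,l}" H P] that HP by (simp add: power2_eq_square numeral_2_eq_2)
    also have "real (card H ^ 2 * card P ^ (m - 2)) = n ^ m * p^2"
    proof -
      have "m \<ge> 2" using that by auto
      then have "n ^ m = n^2 * n ^ (m - 2)" by (metis le_add_diff_inverse power_add)
      then show ?thesis unfolding p_def n_def using n0 n_def by (simp add: field_simps power2_eq_square)
    qed
    finally show ?thesis .
  qed
  have S2': "(\<Sum>y\<in>\<Omega>. ind j y * ind j y) = n ^ m * p" if "j < m" for j
  proof -
    have "(\<Sum>y\<in>\<Omega>. ind j y * ind j y) = (\<Sum>y\<in>\<Omega>. ind j y)" unfolding ind_def by (intro sum.cong) auto
    then show ?thesis using S1 that by simp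
  qed
  have inner: "(\<Sum>l<m. (\<Sum>y\<in>\<Omega>. ind j y * ind l y)) = n^m * p + (real m - 1) * (n^m * p^2)" if "j < m" for j
  proof -
    have "(\<Sum>l<m. (\<Sum>y\<in>\<Omega>. ind j y * ind l y)) = (\<Sum>l<m. if l = j then n^m * p else n^m * p^2)"
      using S2 S2' that by (intro sum.cong) auto
    also have "\<dots> = n^m * p + (\<Sum>l\<in>{..<m} - {j}. n^m * p^2)"
      using that by (subst sum.remove[of _ j]) auto
    also have "\<dots> = n^m * p + (real m - 1) * (n^m * p^2)" using that by simp
    finally show ?thesis using that by (simp add: of_nat_diff)
  qed
  have SX2: "(\<Sum>y\<in>\<Omega>. (\<Sum>j<m. ind j y)^2) = m * (n^m * p + (real m - 1) * (n^m * p^2))"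
  proof -
    have "(\<Sum>y\<in>\<Omega>. (\<Sum>j<m. ind j y)^2) = (\<Sum>y\<in>\<Omega>. \<Sum>j<m. \<Sum>l<m. ind j y * ind l y)"
      by (simp add: power2_eq_square sum_product)
    also have "\<dots> = (\<Sum>j<m. \<Sum>l<m. \<Sum>y\<in>\<Omega>. ind j y * ind l y)"
      by (subst sum.swap) (simp add: sum.swap[of _ \<Omega>])
    also have "\<dots> = (\<Sum>j<m. n^m * p + (real m - 1) * (n^m * p^2))" using inner by (intro sum.cong) auto
    finally show ?thesis by simp
  qed
  have SX: "(\<Sum>y\<in>\<Omega>. (\<Sum>j<m. ind j y)) = m * (n^m * p)"
  proof -
    have "(\<Sum>y\<in>\<Omega>. (\<Sum>j<m. ind j y)) = (\<Sum>j<m. \<Sum>y\<in>\<Omega>. ind j y)" by (rule sum.swap)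
    also have "\<dots> = (\<Sum>j<m. n^m * p)" using S1 by (intro sum.cong) auto
    finally show ?thesis by simp
  qed
  have "(\<Sum>y\<in>\<Omega>. (real (card {j\<in>{..<m}. y j \<in> H}) - real m * p)^2)
        = (\<Sum>y\<in>\<Omega>. (\<Sum>j<m. ind j y)^2 - 2 * (m * p) * (\<Sum>j<m. ind j y) + (m*p)^2)"
    using X by (intro sum.cong) (auto simp: power2_eq_square algebra_simps)
  also have "\<dots> = (\<Sum>y\<in>\<Omega>. (\<Sum>j<m. ind j y)^2) - 2 * (m * p) * (\<Sum>y\<in>\<Omega>. (\<Sum>j<m. ind j y)) + card \<Omega> * (m*p)^2"
    by (simp add: sum.distrib sum_subtractf sum_distrib_left)
  also have "\<dots> = n ^ m * m * p * (1 - p)"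
    using SX2 SX cO unfolding n_def
    by (cases m) (simp_all add: algebra_simps power2_eq_square)
  finally show ?thesis unfolding n_def .
qed

lemma few_low:
  fixes P H :: "'a set"
  assumes finP: "finite P" and HP: "H \<subseteq> P" and ne: "P \<noteq> {}" and big: "card P \<le> 4 * card H"
    and m: "m = 512"
  shows "real (card {y \<in> PiE {..<m} (\<lambda>_. P). card {j\<in>{..<m}. y j \<in> H} < 64})
          \<le> real (card P) ^ m / 32"
proof -
  define \<Omega> where "\<Omega> = PiE {..<m} (\<lambda>_. P)"
  define L where "L = {y \<in> \<Omega>. card {j\<in>{..<m}. y j \<in> H} < 64}"
  define p where "p = real (card H) / real (card P)"
  define X where "X y = real (card {j\<in>{..<m}. y j \<in> H})" for y :: "nat \<Rightarrow> 'a"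
  have n0: "real (card P) > 0" using finP ne by (simp add: card_gt_0_iff)
  have p4: "p \<ge> 1/4" unfolding p_def using big n0 by (simp add: field_simps)
  have finO: "finite \<Omega>" unfolding \<Omega>_def using finP by (simp add: finite_PiE)
  have LO: "L \<subseteq> \<Omega>" unfolding L_def by auto
  have var: "(\<Sum>y\<in>\<Omega>. (X y - real m * p)^2) = real (card P) ^ m * real m * p * (1 - p)"
    unfolding \<Omega>_def X_def p_def using variance_count[OF finP HP ne, of m] by simp
  have "p * (1 - p) = 1/4 - (p - 1/2)^2" by (simp add: power2_eq_square algebra_simps)
  then have "p * (1 - p) \<le> 1/4" using zero_le_power2[of "p - 1/2"] by linarith
  moreover have "real m * p * (1 - p) = 512 * (p * (1 - p))" using m by simp
  ultimately have h: "real m * p * (1 - p) \<le> 128" by linarith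
  have "real (card P) ^ m * (real m * p * (1 - p)) \<le> real (card P) ^ m * 128"
    using n0 h by (intro mult_left_mono) auto
  then have "real (card P) ^ m * real m * p * (1 - p) \<le> real (card P) ^ m * 128"
    by (simp add: mult.assoc)
  have low: "4096 \<le> (X y - real m * p)^2" if "y \<in> L" for y
  proof -
    have "X y < 64" using that unfolding L_def X_def by auto
    then have "64 \<le> real m * p - X y" using p4 m by simp
    then have "64 * 64 \<le> (real m * p - X y) * (real m * p - X y)" by (intro mult_mono) auto
    then show ?thesis by (simp add: power2_eq_square algebra_simps)
  qed
  have "real (card L) * 4096 = (\<Sum>y\<in>L. 4096)" by simp
  also have "\<dots> \<le> (\<Sum>y\<in>L. (X y - real m * p)^2)" using low by (intro sum_mono) auto
  also have "\<dots> \<le> (\<Sum>y\<in>\<Omega>. (X y - real m * p)^2)"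
    using LO finO by (intro sum_mono2) auto
  also have "\<dots> \<le> real (card P) ^ m * 128" using var \<open>real (card P) ^ m * real m * p * (1 - p) \<le> _\<close> by simp
  finally have "real (card L) * 4096 \<le> real (card P) ^ m * 128" .
  then show ?thesis unfolding L_def \<Omega>_def by simp
qed

definition sw :: "nat set \<Rightarrow> (nat \<Rightarrow> 'a) \<times> (nat \<Rightarrow> 'a) \<Rightarrow> (nat \<Rightarrow> 'a) \<times> (nat \<Rightarrow> 'a)" where
  "sw s w = ((\<lambda>i. if i \<in> s then snd w i else fst w i), (\<lambda>i. if i \<in> s then fst w i else snd w i))"

lemma sw_sw [simp]: "sw s (sw s w) = w"
  by (cases w) (auto simp: sw_def fun_eq_iff)

lemma sw_in:
  assumes "s \<subseteq> {..<m}" "w \<in> PiE {..<m} (\<lambda>_. P) \<times> PiE {..<m} (\<lambda>_. P)"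
  shows "sw s w \<in> PiE {..<m} (\<lambda>_. P) \<times> PiE {..<m} (\<lambda>_. P)"
  using assms by (cases w) (auto simp: sw_def PiE_iff extensional_def)

lemma swap_count:
  fixes x y :: "nat \<Rightarrow> 'a" and R :: "'a set" and m t :: nat
  shows "card {s. s \<subseteq> {..<m} \<and> (\<forall>i<m. (if i \<in> s then y i else x i) \<in> R)
                 \<and> t \<le> card {j\<in>{..<m}. (if j \<in> s then x j else y j) \<notin> R}} \<le> 2 ^ (m - t)"
proof -
  define SR where "SR = {s. s \<subseteq> {..<m} \<and> (\<forall>i<m. (if i \<in> s then y i else x i) \<in> R)
                 \<and> t \<le> card {j\<in>{..<m}. (if j \<in> s then x j else y j) \<notin> R}}"
  define D where "D = {i\<in>{..<m}. (x i \<in> R) \<noteq> (y i \<in> R)}"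
  define D0 where "D0 = {i\<in>D. x i \<notin> R}"
  have "card SR \<le> 2 ^ (m - t)"
  proof (cases "SR = {}")
    case True then show ?thesis by simp
  next
    case False
    then obtain s0 where s0: "s0 \<in> SR" by auto
    have fD: "finite D" unfolding D_def by auto
    have sub: "{j\<in>{..<m}. (if j \<in> s0 then x j else y j) \<notin> R} \<subseteq> D"
      using s0 unfolding SR_def D_def by (auto split: if_splits)
    have "t \<le> card {j\<in>{..<m}. (if j \<in> s0 then x j else y j) \<notin> R}"
      using s0 unfolding SR_def by blast
    also have "\<dots> \<le> card D" by (rule card_mono[OF fD sub])
    finally have tD: "t \<le> card D" .
    have "SR \<subseteq> (\<lambda>u. u \<union> D0) ` Pow ({..<m} - D)"
    proof
      fix s assume s: "s \<in> SR"
      have "s \<inter> D = D0"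
      proof (intro equalityI subsetI)
        fix i assume "i \<in> s \<inter> D"
        then have "i < m" "y i \<in> R" using s unfolding SR_def D_def by auto
        then show "i \<in> D0" using \<open>i \<in> s \<inter> D\<close> unfolding D0_def D_def by auto
      next
        fix i assume i: "i \<in> D0"
        then have "i < m" "x i \<notin> R" unfolding D0_def D_def by auto
        then show "i \<in> s \<inter> D" using s i unfolding SR_def D0_def by (auto split: if_splits)
      qed
      moreover have "s \<subseteq> {..<m}" using s unfolding SR_def by auto
      ultimately have "s = (s - D) \<union> D0" "s - D \<in> Pow ({..<m} - D)" by auto
      then show "s \<in> (\<lambda>u. u \<union> D0) ` Pow ({..<m} - D)" by blast
    qed
    then have "card SR \<le> card ((\<lambda>u. u \<union> D0) ` Pow ({..<m} - D))"
      by (intro card_mono) auto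
    also have "\<dots> \<le> card (Pow ({..<m} - D))" by (rule card_image_le) auto
    also have "\<dots> = 2 ^ (m - card D)"
    proof -
      have "card ({..<m} - D) = m - card D" using fD by (subst card_Diff_subset) (auto simp: D_def)
      then show ?thesis by (simp add: card_Pow)
    qed
    also have "\<dots> \<le> 2 ^ (m - t)" using tD by (intro power_increasing) auto
    finally show ?thesis .
  qed
  then show ?thesis unfolding SR_def .
qed

lemma sym_bound:
  fixes P :: "'a set" and Rng :: "'a set set" and m t B :: nat
  assumes finP: "finite P"
    and trB: "\<And>Q. finite Q \<Longrightarrow> Q \<subseteq> P \<Longrightarrow> card Q \<le> 2 * m \<Longrightarrow> card {R \<inter> Q | R. R \<in> Rng} \<le> B"
  defines "\<Omega> \<equiv> PiE {..<m} (\<lambda>_. P)"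
  defines "E2 \<equiv> {w \<in> \<Omega> \<times> \<Omega>. \<exists>R\<in>Rng. (\<forall>i<m. fst w i \<in> R) \<and> t \<le> card {j\<in>{..<m}. snd w j \<notin> R}}"
  shows "card E2 * 2^m \<le> card \<Omega> ^ 2 * (B * 2^(m - t))"
proof -
  define S where "S = Pow {..<m::nat}"
  have finO: "finite \<Omega>" unfolding \<Omega>_def using finP by (simp add: finite_PiE)
  have E2O: "E2 \<subseteq> \<Omega> \<times> \<Omega>" unfolding E2_def by auto
  have each: "card {w \<in> \<Omega> \<times> \<Omega>. sw s w \<in> E2} = card E2" if "s \<in> S" for s
  proof -
    have "bij_betw (sw s) {w \<in> \<Omega> \<times> \<Omega>. sw s w \<in> E2} E2"
    proof (rule bij_betw_byWitness[where f' = "sw s"])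
      show "\<forall>a\<in>{w \<in> \<Omega> \<times> \<Omega>. sw s w \<in> E2}. sw s (sw s a) = a" by simp
      show "\<forall>a'\<in>E2. sw s (sw s a') = a'" by simp
      show "sw s ` {w \<in> \<Omega> \<times> \<Omega>. sw s w \<in> E2} \<subseteq> E2" by auto
      show "sw s ` E2 \<subseteq> {w \<in> \<Omega> \<times> \<Omega>. sw s w \<in> E2}"
      proof
        fix v assume "v \<in> sw s ` E2"
        then obtain e where e: "e \<in> E2" "v = sw s e" by auto
        have "s \<subseteq> {..<m}" using that unfolding S_def by auto
        then have "v \<in> \<Omega> \<times> \<Omega>" using sw_in[of s m e P] e E2O unfolding \<Omega>_def by auto
        moreover have "sw s v \<in> E2" using e by simp
        ultimately show "v \<in> {w \<in> \<Omega> \<times> \<Omega>. sw s w \<in> E2}" by simp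
      qed
    qed
    then show ?thesis by (rule bij_betw_same_card)
  qed
  have per: "card {s \<in> S. sw s w \<in> E2} \<le> B * 2^(m - t)" if w: "w \<in> \<Omega> \<times> \<Omega>" for w
  proof -
    obtain x y where xy: "w = (x, y)" by (cases w)
    define Q where "Q = x ` {..<m} \<union> y ` {..<m}"
    have QP: "Q \<subseteq> P" using w xy unfolding Q_def \<Omega>_def by (auto simp: PiE_iff)
    have finQ: "finite Q" unfolding Q_def by auto
    have cQ: "card Q \<le> 2 * m"
    proof -
      have "card Q \<le> card (x ` {..<m}) + card (y ` {..<m})" unfolding Q_def by (rule card_Un_le)
      also have "\<dots> \<le> m + m" using card_image_le[of "{..<m}" x] card_image_le[of "{..<m}" y] by simp
      finally show ?thesis by simp
    qed
    define Tr where "Tr = {R \<inter> Q | R. R \<in> Rng}"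
    have "Tr \<subseteq> Pow Q" unfolding Tr_def by auto
    then have finTr: "finite Tr" using finQ by (meson finite_Pow_iff rev_finite_subset)
    define SR where "SR R' = {s. s \<subseteq> {..<m} \<and> (\<forall>i<m. (if i \<in> s then y i else x i) \<in> R')
                 \<and> t \<le> card {j\<in>{..<m}. (if j \<in> s then x j else y j) \<notin> R'}}" for R'
    have "{s \<in> S. sw s w \<in> E2} \<subseteq> (\<Union>R'\<in>Tr. SR R')"
    proof
      fix s assume s: "s \<in> {s \<in> S. sw s w \<in> E2}"
      then obtain R where R: "R \<in> Rng" "\<forall>i<m. fst (sw s w) i \<in> R"
        "t \<le> card {j\<in>{..<m}. snd (sw s w) j \<notin> R}" unfolding E2_def by blast
      have inQ: "x i \<in> Q" "y i \<in> Q" if "i < m" for i using that unfolding Q_def by auto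
      have "\<forall>i<m. (if i \<in> s then y i else x i) \<in> R \<inter> Q"
        using R(2) inQ unfolding xy sw_def by auto
      moreover have "{j\<in>{..<m}. (if j \<in> s then x j else y j) \<notin> R \<inter> Q} = {j\<in>{..<m}. snd (sw s w) j \<notin> R}"
        using inQ unfolding xy sw_def by auto
      ultimately have "s \<in> SR (R \<inter> Q)" using R(3) s unfolding SR_def S_def by auto
      moreover have "R \<inter> Q \<in> Tr" using R(1) unfolding Tr_def by auto
      ultimately show "s \<in> (\<Union>R'\<in>Tr. SR R')" by blast
    qed
    then have "card {s \<in> S. sw s w \<in> E2} \<le> card (\<Union>R'\<in>Tr. SR R')"
      by (intro card_mono) (auto simp: SR_def intro: finite_subset[of _ "Pow {..<m}"])
    also have "\<dots> \<le> (\<Sum>R'\<in>Tr. card (SR R'))" by (rule card_UN_le[OF finTr])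
    also have "\<dots> \<le> (\<Sum>R'\<in>Tr. 2^(m - t))"
      unfolding SR_def by (intro sum_mono swap_count)
    also have "\<dots> = card Tr * 2^(m - t)" by simp
    also have "\<dots> \<le> B * 2^(m - t)" using trB[OF finQ QP cQ] unfolding Tr_def by simp
    finally show ?thesis .
  qed
  have cS: "card S = 2^m" unfolding S_def by (simp add: card_Pow)
  have finS: "finite S" unfolding S_def by simp
  have "card E2 * 2^m = (\<Sum>s\<in>S. card E2)" using cS by simp
  also have "\<dots> = (\<Sum>s\<in>S. card {w \<in> \<Omega> \<times> \<Omega>. sw s w \<in> E2})" using each by simp
  also have "\<dots> = (\<Sum>s\<in>S. \<Sum>w\<in>\<Omega> \<times> \<Omega>. of_bool (sw s w \<in> E2))"
  proof (intro sum.cong refl)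
    fix s assume "s \<in> S"
    have "(\<Sum>w\<in>\<Omega> \<times> \<Omega>. (of_bool (sw s w \<in> E2) :: nat)) = card ((\<Omega> \<times> \<Omega>) \<inter> {w. sw s w \<in> E2})"
      using finO by simp
    then show "card {w \<in> \<Omega> \<times> \<Omega>. sw s w \<in> E2} = (\<Sum>w\<in>\<Omega> \<times> \<Omega>. of_bool (sw s w \<in> E2))"
      by (simp add: Collect_conj_eq Int_commute)
  qed
  also have "\<dots> = (\<Sum>w\<in>\<Omega> \<times> \<Omega>. \<Sum>s\<in>S. of_bool (sw s w \<in> E2))" by (rule sum.swap)
  also have "\<dots> = (\<Sum>w\<in>\<Omega> \<times> \<Omega>. card {s \<in> S. sw s w \<in> E2})"
  proof (intro sum.cong refl)
    fix w :: "(nat \<Rightarrow> 'a) \<times> (nat \<Rightarrow> 'a)"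
    have "(\<Sum>s\<in>S. (of_bool (sw s w \<in> E2) :: nat)) = card (S \<inter> {s. sw s w \<in> E2})"
      using finS by simp
    then show "(\<Sum>s\<in>S. of_bool (sw s w \<in> E2)) = card {s \<in> S. sw s w \<in> E2}"
      by (simp add: Collect_conj_eq Int_commute)
  qed
  also have "\<dots> \<le> (\<Sum>w\<in>\<Omega> \<times> \<Omega>. B * 2^(m - t))" by (intro sum_mono per)
  also have "\<dots> = card \<Omega> ^ 2 * (B * 2^(m - t))" by (simp add: card_cartesian_product power2_eq_square)
  finally show ?thesis .
qed

lemma card_fix:
  assumes "finite I" "J \<subseteq> I" "\<forall>k\<in>J. g k \<in> P"
  shows "card {x \<in> PiE I (\<lambda>_. P). \<forall>k\<in>J. x k = g k} = card P ^ (card I - card J)"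
proof -
  have "{x \<in> PiE I (\<lambda>_. P). \<forall>k\<in>J. x k = g k} = PiE I (\<lambda>k. if k \<in> J then {g k} else P)"
    using assms by (auto simp: PiE_iff extensional_def split: if_splits)
  then have "card {x \<in> PiE I (\<lambda>_. P). \<forall>k\<in>J. x k = g k} = (\<Prod>k\<in>I. card (if k \<in> J then {g k} else P))"
    using assms by (simp add: card_PiE)
  also have "\<dots> = (\<Prod>k\<in>I. if k \<in> J then 1 else card P)" by (intro prod.cong) auto
  also have "\<dots> = 1 ^ card (I \<inter> {k. k \<in> J}) * card P ^ card (I \<inter> - {k. k \<in> J})"
    using assms by (simp add: prod.If_cases)
  also have "I \<inter> - {k. k \<in> J} = I - J" by auto
  also have "card (I - J) = card I - card J" using assms by (simp add: card_Diff_subset finite_subset)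
  finally show ?thesis by simp
qed

lemma card_contains3:
  assumes finP: "finite P" and TP: "T \<subseteq> P" and T3: "card T = 3"
  shows "card {x \<in> PiE {..<m} (\<lambda>_. P). T \<subseteq> x ` {..<m}} \<le> m^3 * card P ^ (m - 3)"
proof -
  obtain a b d where T: "T = {a,b,d}" "a \<noteq> b" "b \<noteq> d" "a \<noteq> d"
    using T3 unfolding card_3_iff by blast
  define \<Omega> where "\<Omega> = PiE {..<m} (\<lambda>_. P)"
  define Z where "Z ijl = {x \<in> \<Omega>. x (fst ijl) = a \<and> x (fst (snd ijl)) = b \<and> x (snd (snd ijl)) = d}" for ijl
  have finO: "finite \<Omega>" unfolding \<Omega>_def using finP by (simp add: finite_PiE)
  have sub: "{x \<in> \<Omega>. T \<subseteq> x ` {..<m}} \<subseteq> (\<Union>ijl\<in>{..<m} \<times> {..<m} \<times> {..<m}. Z ijl)"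
  proof
    fix x assume x: "x \<in> {x \<in> \<Omega>. T \<subseteq> x ` {..<m}}"
    then obtain i j l where "i < m" "j < m" "l < m" "x i = a" "x j = b" "x l = d"
      unfolding T by auto
    then show "x \<in> (\<Union>ijl\<in>{..<m} \<times> {..<m} \<times> {..<m}. Z ijl)" using x unfolding Z_def
      by (intro UN_I[of "(i,j,l)"]) auto
  qed
  have cZ: "card (Z ijl) \<le> card P ^ (m - 3)" if "ijl \<in> {..<m} \<times> {..<m} \<times> {..<m}" for ijl
  proof -
    obtain i j l where ijl: "ijl = (i,j,l)" by (cases ijl) auto
    show ?thesis
    proof (cases "i \<noteq> j \<and> j \<noteq> l \<and> i \<noteq> l")
      case True
      define g where "g k = (if k = i then a else if k = j then b else d)" for k
      have "Z ijl = {x \<in> \<Omega>. \<forall>k\<in>{i,j,l}. x k = g k}"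
        unfolding Z_def ijl g_def using True by auto
      also have "card \<dots> = card P ^ (card {..<m} - card {i,j,l})"
        unfolding \<Omega>_def using that TP T True ijl
        by (intro card_fix) (auto simp: g_def)
      also have "card {i,j,l} = 3" using True by simp
      finally show ?thesis by simp
    next
      case False
      then have "Z ijl = {}" unfolding Z_def ijl using T by auto
      then show ?thesis by simp
    qed
  qed
  have "card {x \<in> \<Omega>. T \<subseteq> x ` {..<m}} \<le> card (\<Union>ijl\<in>{..<m} \<times> {..<m} \<times> {..<m}. Z ijl)"
    using sub finO by (intro card_mono) (auto simp: Z_def)
  also have "\<dots> \<le> (\<Sum>ijl\<in>{..<m} \<times> {..<m} \<times> {..<m}. card (Z ijl))" by (rule card_UN_le) auto
  also have "\<dots> \<le> (\<Sum>ijl\<in>{..<m} \<times> {..<m} \<times> {..<m}. card P ^ (m - 3))" by (intro sum_mono cZ)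
  also have "\<dots> = m^3 * card P ^ (m - 3)" by (simp add: card_cartesian_product power3_eq_cube)
  finally show ?thesis unfolding \<Omega>_def .
qed

lemma card_small_range:
  assumes finP: "finite P" and m0: "0 < m"
  shows "card {x \<in> PiE {..<m} (\<lambda>_. P). card (x ` {..<m}) < 3} \<le> card P ^ 2 * 2 ^ m"
proof -
  define \<Omega> where "\<Omega> = PiE {..<m} (\<lambda>_. P)"
  have finO: "finite \<Omega>" unfolding \<Omega>_def using finP by (simp add: finite_PiE)
  have sub: "{x \<in> \<Omega>. card (x ` {..<m}) < 3} \<subseteq> (\<Union>a\<in>P. \<Union>b\<in>P. PiE {..<m} (\<lambda>_. {a,b}))"
  proof
    fix x assume x: "x \<in> {x \<in> \<Omega>. card (x ` {..<m}) < 3}"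
    have xP: "x ` {..<m} \<subseteq> P" using x unfolding \<Omega>_def by (auto simp: PiE_iff)
    obtain a where a: "a \<in> x ` {..<m}" using m0 by auto
    have fin: "finite (x ` {..<m} - {a})" by auto
    have "card (x ` {..<m}) < 3" using x by auto
    then have "card (x ` {..<m} - {a}) \<le> Suc 0" using a by (simp add: card_Diff_singleton)
    then have one: "\<forall>u\<in>x ` {..<m} - {a}. \<forall>v\<in>x ` {..<m} - {a}. u = v"
      using card_le_Suc0_iff_eq[OF fin] by blast
    obtain b where b: "x ` {..<m} \<subseteq> {a, b}" "b \<in> P"
    proof (cases "x ` {..<m} - {a} = {}")
      case True
      then have "x ` {..<m} \<subseteq> {a, a}" by auto
    moreover have "a \<in> P" using a xP by auto
    ultimately show ?thesis by (rule that)
    next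
      case False
      then obtain b where b: "b \<in> x ` {..<m} - {a}" by auto
      have "x ` {..<m} \<subseteq> {a, b}"
      proof
        fix u assume "u \<in> x ` {..<m}"
        show "u \<in> {a, b}"
        proof (cases "u = a")
          case True then show ?thesis by simp
        next
          case False
          then have "u \<in> x ` {..<m} - {a}" using \<open>u \<in> x ` {..<m}\<close> by simp
          then have "u = b" using one b by blast
          then show ?thesis by simp
        qed
      qed
      moreover have "b \<in> P" using b xP by auto
      ultimately show ?thesis by (rule that)
    qed
    have "x \<in> PiE {..<m} (\<lambda>_. {a,b})" using x b unfolding \<Omega>_def by (auto simp: PiE_iff)
    moreover have "a \<in> P" using a xP by auto
    ultimately show "x \<in> (\<Union>a\<in>P. \<Union>b\<in>P. PiE {..<m} (\<lambda>_. {a,b}))" using b(2)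
      by (intro UN_I[of a] UN_I[of b])
  qed
  have "card {x \<in> \<Omega>. card (x ` {..<m}) < 3} \<le> card (\<Union>a\<in>P. \<Union>b\<in>P. PiE {..<m} (\<lambda>_. {a,b}))"
  proof -
    have "finite (\<Union>a\<in>P. \<Union>b\<in>P. PiE {..<m} (\<lambda>_. {a,b}))"
      using finP by (intro finite_UN_I finite_PiE) auto
    then show ?thesis using sub by (rule card_mono)
  qed
  also have "\<dots> \<le> (\<Sum>a\<in>P. card (\<Union>b\<in>P. PiE {..<m} (\<lambda>_. {a,b})))" by (rule card_UN_le[OF finP])
  also have "\<dots> \<le> (\<Sum>a\<in>P. \<Sum>b\<in>P. card (PiE {..<m} (\<lambda>_. {a,b})))"
    by (intro sum_mono card_UN_le[OF finP])
  also have "\<dots> \<le> (\<Sum>a\<in>P. \<Sum>b\<in>P. 2 ^ m)"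
  proof (intro sum_mono)
    fix a b
    have "card (PiE {..<m} (\<lambda>_. {a,b})) = card {a,b} ^ m" by (simp add: card_PiE)
    also have "\<dots> \<le> 2 ^ m"
    proof (intro power_mono)
      show "card {a, b} \<le> 2" by (cases "a = b") auto
    qed simp
    finally show "card (PiE {..<m} (\<lambda>_. {a,b})) \<le> 2 ^ m" .
  qed
  also have "\<dots> = card P ^ 2 * 2 ^ m" by (simp add: power2_eq_square)
  finally show ?thesis unfolding \<Omega>_def .
qed

lemma failing_bound:
  fixes P :: "(real^3) set" and c :: "real^3" and m :: nat
  assumes finP: "finite P" and ne: "P \<noteq> {}" and cp: "centerpoint P c" and m: "m = 512"
  defines "\<Omega> \<equiv> PiE {..<m} (\<lambda>_. P)"
  defines "Fl \<equiv> {x \<in> \<Omega>. \<exists>a. a \<noteq> 0 \<and> (\<forall>i<m. inner a (x i) > inner a c)}"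
  shows "real (card Fl) \<le> real (card P) ^ m / 4"
proof -
  define K where "K = real (card P) ^ m"
  have K0: "K > 0" unfolding K_def using finP ne by (simp add: card_gt_0_iff)
  have finO: "finite \<Omega>" unfolding \<Omega>_def using finP by (simp add: finite_PiE)
  have cO: "card \<Omega> = card P ^ m" unfolding \<Omega>_def using finP by (simp add: card_PiE)
  define Rng where "Rng = {{p. inner a p > inner a c} | a. a \<noteq> (0::real^3)}"
  define E2 where "E2 = {w \<in> \<Omega> \<times> \<Omega>. \<exists>R\<in>Rng. (\<forall>i<m. fst w i \<in> R) \<and> 64 \<le> card {j\<in>{..<m}. snd w j \<notin> R}}"
  have trB: "card {R \<inter> Q | R. R \<in> Rng} \<le> 1025 ^ 4"
    if "finite Q" "Q \<subseteq> P" "card Q \<le> 2 * m" for Q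
  proof -
    have "{R \<inter> Q | R. R \<in> Rng} = traces Q c"
    proof (intro equalityI subsetI)
      fix X assume "X \<in> {R \<inter> Q | R. R \<in> Rng}"
      then obtain a where a: "a \<noteq> 0" "X = {p. inner a p > inner a c} \<inter> Q" unfolding Rng_def by blast
      then have "X = {p \<in> Q. inner a p > inner a c}" by blast
      then show "X \<in> traces Q c" unfolding traces_def using a(1) by blast
    next
      fix X assume "X \<in> traces Q c"
      then obtain a where a: "a \<noteq> 0" "X = {p \<in> Q. inner a p > inner a c}" unfolding traces_def by blast
      then have "X = {p. inner a p > inner a c} \<inter> Q" by blast
      moreover have "{p. inner a p > inner a c} \<in> Rng" unfolding Rng_def using a(1) by blast
      ultimately show "X \<in> {R \<inter> Q | R. R \<in> Rng}" by blast
    qed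
    then have "card {R \<inter> Q | R. R \<in> Rng} \<le> (card Q + 1) ^ 4" using card_traces[OF that(1)] by simp
    also have "\<dots> \<le> 1025 ^ 4" using that(3) m by (intro power_mono) auto
    finally show ?thesis .
  qed
  have up: "card E2 * 2^m \<le> card \<Omega> ^ 2 * (1025 ^ 4 * 2^(m - 64))"
    unfolding E2_def \<Omega>_def by (rule sym_bound[OF finP trB])
  have m64: "64 + (m - 64) = m" using m by simp
  have pw: "(2::nat)^m = 2^64 * 2^(m - 64)" by (metis m64 power_add)
  have e1: "card E2 * 2^m = (card E2 * 2^64) * 2^(m-64)" unfolding pw by (simp only: mult.assoc)
  have e2: "card \<Omega> ^ 2 * (1025 ^ 4 * 2^(m - 64)) = (card \<Omega> ^ 2 * 1025 ^ 4) * 2^(m-64)"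
    by (simp only: mult.assoc)
  have "(card E2 * 2^64) * 2^(m - 64) \<le> (card \<Omega> ^ 2 * 1025 ^ 4) * 2^(m-64)"
    using up unfolding e1 e2 .
  then have "card E2 * 2^64 \<le> card \<Omega> ^ 2 * 1025 ^ 4" by (simp only: mult_le_cancel2) simp
  then have "real (card E2 * 2^64) \<le> real (card \<Omega> ^ 2 * 1025 ^ 4)" by (simp only: of_nat_le_iff)
  then have up': "real (card E2) * 2^64 \<le> K^2 * 1025 ^ 4"
    unfolding K_def using cO by simp
  define ax where "ax x = (SOME a. a \<noteq> 0 \<and> (\<forall>i<m. inner a (x i) > inner a c))" for x :: "nat \<Rightarrow> real^3"
  have ax: "ax x \<noteq> 0 \<and> (\<forall>i<m. inner (ax x) (x i) > inner (ax x) c)" if "x \<in> Fl" for x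
  proof -
    have ex: "\<exists>a. a \<noteq> 0 \<and> (\<forall>i<m. inner a (x i) > inner a c)" using that unfolding Fl_def by blast
    show ?thesis unfolding ax_def by (rule someI_ex[OF ex])
  qed
  define Y where "Y x = {y \<in> \<Omega>. 64 \<le> card {j\<in>{..<m}. y j \<notin> {p. inner (ax x) p > inner (ax x) c}}}" for x
  have SY: "Sigma Fl Y \<subseteq> E2"
  proof (rule subsetI)
    fix w assume "w \<in> Sigma Fl Y"
    then obtain x y where w: "w = (x, y)" "x \<in> Fl" "y \<in> Y x" by blast
    have R: "{p. inner (ax x) p > inner (ax x) c} \<in> Rng" using ax[OF w(2)] unfolding Rng_def by blast
    have R2: "\<forall>i<m. x i \<in> {p. inner (ax x) p > inner (ax x) c}" using ax[OF w(2)] by simp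
    have xO: "x \<in> \<Omega>" using w(2) unfolding Fl_def by blast
    have yO: "y \<in> \<Omega>" and R3: "64 \<le> card {j\<in>{..<m}. y j \<notin> {p. inner (ax x) p > inner (ax x) c}}"
      using w(3) unfolding Y_def by blast+
    have A: "(x, y) \<in> \<Omega> \<times> \<Omega>" using xO yO by (rule SigmaI)
    have B: "\<exists>R\<in>Rng. (\<forall>i<m. fst (x, y) i \<in> R) \<and> 64 \<le> card {j\<in>{..<m}. snd (x, y) j \<notin> R}"
      using R R2 R3 by (intro bexI[of _ "{p. inner (ax x) p > inner (ax x) c}"] conjI) simp_all
    show "w \<in> E2" unfolding E2_def w(1) by (rule CollectI, rule conjI[OF A B])
  qed
  have cY: "real (card (Y x)) \<ge> K - K / 32" if x: "x \<in> Fl" for x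
  proof -
    define a where "a = ax x"
    define H where "H = {p \<in> P. inner a p \<le> inner a c}"
    define L where "L = {y \<in> \<Omega>. card {j\<in>{..<m}. y j \<in> H} < 64}"
    have a0: "a \<noteq> 0" using ax[OF x] unfolding a_def by blast
    have "real (card P) / 4 \<le> real (card {p \<in> P. inner a p \<le> inner a c})"
      using cp a0 unfolding centerpoint_def by blast
    then have big: "card P \<le> 4 * card H" unfolding H_def by simp
    have HP: "H \<subseteq> P" unfolding H_def by blast
    have L: "real (card L) \<le> K / 32" unfolding L_def \<Omega>_def K_def using few_low[OF finP HP ne big m] .
    have LO: "L \<subseteq> \<Omega>" unfolding L_def by blast
    have eq: "{j\<in>{..<m}. y j \<notin> {p. inner a p > inner a c}} = {j\<in>{..<m}. y j \<in> H}"
      if "y \<in> \<Omega>" for y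
    proof -
      have "y j \<in> P" if "j < m" for j using \<open>y \<in> \<Omega>\<close> that unfolding \<Omega>_def by (simp add: PiE_iff)
      then show ?thesis unfolding H_def by (auto simp: not_less)
    qed
    have "Y x = \<Omega> - L"
    proof (intro equalityI subsetI)
      fix y assume "y \<in> Y x"
      then have "y \<in> \<Omega>" "64 \<le> card {j\<in>{..<m}. y j \<notin> {p. inner a p > inner a c}}" unfolding Y_def a_def by blast+
      then show "y \<in> \<Omega> - L" using eq unfolding L_def by simp
    next
      fix y assume "y \<in> \<Omega> - L"
      then have "y \<in> \<Omega>" "\<not> card {j\<in>{..<m}. y j \<in> H} < 64" unfolding L_def by blast+
      then show "y \<in> Y x" using eq unfolding Y_def a_def by simp
    qed
    then have "card (Y x) = card \<Omega> - card L" using finO LO by (simp add: card_Diff_subset finite_subset)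
    moreover have "card L \<le> card \<Omega>" using finO LO by (rule card_mono)
    ultimately have "real (card (Y x)) = K - real (card L)" using cO unfolding K_def by (simp add: of_nat_diff)
    then show ?thesis using L by simp
  qed
  have finFl: "finite Fl" unfolding Fl_def using finO by simp
  have finE2: "finite E2" unfolding E2_def using finO by simp
  have finY: "finite (Y x)" for x unfolding Y_def using finO by simp
  have "real (card Fl) * (K - K / 32) = (\<Sum>x\<in>Fl. (K - K / 32))" by simp
  also have "\<dots> \<le> (\<Sum>x\<in>Fl. real (card (Y x)))" using cY by (intro sum_mono) blast
  also have "\<dots> = real (card (Sigma Fl Y))"
  proof -
    have "card (Sigma Fl Y) = (\<Sum>x\<in>Fl. card (Y x))" using finFl finY by (simp add: card_SigmaI)
    then show ?thesis by simp
  qed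
  also have "\<dots> \<le> real (card E2)" using card_mono[OF finE2 SY] by simp
  finally have low: "real (card Fl) * (K - K / 32) \<le> real (card E2)" .
  then have "real (card Fl) * (K - K / 32) * 2^64 \<le> real (card E2) * 2^64"
    by (rule mult_right_mono) simp
  also have "\<dots> \<le> K^2 * 1025 ^ 4" by (rule up')
  finally have A0: "real (card Fl) * (K - K / 32) * 2^64 \<le> K^2 * 1025 ^ 4" .
  have eqA: "real (card Fl) * (K - K / 32) * 2^64 = (real (card Fl) * (31 / 32) * 2^64) * K"
    by (simp add: algebra_simps)
  have eqB: "K^2 * 1025 ^ 4 = (K * 1025 ^ 4) * K" by (simp add: power2_eq_square algebra_simps)
  have A: "(real (card Fl) * (31 / 32) * 2^64) * K \<le> (K * 1025 ^ 4) * K"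
    using A0 unfolding eqA eqB .
  then have "real (card Fl) * (31 / 32) * 2^64 \<le> K * 1025 ^ 4"
    using K0 by (simp only: mult_le_cancel_right_pos)
  then have B: "real (card Fl) * (31 * 2^64) \<le> K * (32 * 1025 ^ 4)"
    by simp
  have C: "K * (32 * 1025 ^ 4) \<le> (K / 4) * (31 * 2^64)" using K0 by simp
  from B C have "real (card Fl) * (31 * 2^64) \<le> (K / 4) * (31 * 2^64)" by linarith
  then have "real (card Fl) \<le> K / 4" by simp
  then show ?thesis unfolding K_def .
qed

lemma main_bound:
  fixes P :: "(real^3) set" and c r :: "real^3"
  assumes finP: "finite P" and n4: "4 \<le> card P" and up: "\<forall>p\<in>P. p$3 > 0"
    and cp: "centerpoint P c" and r0: "r$3 = 0"
  shows "real (card P) ^ 3 \<le> real (card {S \<in> triangles P. convex hull S \<inter> closed_segment c r \<noteq> {}}) * (2 * 512^3)"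
proof -
  define m :: nat where "m = 512"
  define n where "n = card P"
  define \<Omega> where "\<Omega> = PiE {..<m} (\<lambda>_. P)"
  define Fl where "Fl = {x \<in> \<Omega>. \<exists>a. a \<noteq> 0 \<and> (\<forall>i<m. inner a (x i) > inner a c)}"
  define Sm where "Sm = {x \<in> \<Omega>. card (x ` {..<m}) < 3}"
  define G where "G = {S \<in> triangles P. convex hull S \<inter> closed_segment c r \<noteq> {}}"
  define Good where "Good = \<Omega> - Fl - Sm"
  have ne: "P \<noteq> {}" using n4 by auto
  have n0: "real n > 0" unfolding n_def using n4 by simp
  have m0: "0 < m" unfolding m_def by simp
  have finO: "finite \<Omega>" unfolding \<Omega>_def using finP by (simp add: finite_PiE)
  have cO: "card \<Omega> = n ^ m" unfolding \<Omega>_def n_def using finP by (simp add: card_PiE)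
  have F: "real (card Fl) \<le> real n ^ m / 4"
    using failing_bound[OF finP ne cp m_def] unfolding \<Omega>_def Fl_def n_def .
  have S0: "card Sm \<le> n ^ 2 * 2 ^ m" unfolding Sm_def \<Omega>_def n_def by (rule card_small_range[OF finP m0])
  have "4 * (n ^ 2 * 2 ^ m) \<le> n ^ m"
  proof -
    have a: "4 * 2^m = (2::nat)^(m + 2)" by (simp add: power_add)
    have b: "(4::nat)^(m-2) = 2^(2 * (m - 2))" by (simp add: power_mult)
    have "m + 2 \<le> 2 * (m - 2)" unfolding m_def by simp
    then have "(2::nat)^(m + 2) \<le> 2^(2 * (m - 2))" by (rule power_increasing) simp
    then have c: "4 * 2^m \<le> (4::nat)^(m-2)" unfolding a b .
    have d: "(4::nat)^(m-2) \<le> n^(m-2)" using n4 unfolding n_def by (rule power_mono) simp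
    have e: "n ^ m = n^2 * n^(m-2)" unfolding m_def by (simp flip: power_add)
    have "4 * (n ^ 2 * 2 ^ m) = n^2 * (4 * 2^m)" by simp
    also have "\<dots> \<le> n^2 * n^(m-2)" using c d by simp
    finally show ?thesis unfolding e .
  qed
  then have "real (4 * (n ^ 2 * 2 ^ m)) \<le> real (n ^ m)" by (simp only: of_nat_le_iff)
  then have h1: "4 * (real n ^ 2 * 2 ^ m) \<le> real n ^ m" by simp
  have "real (card Sm) \<le> real (n ^ 2 * 2 ^ m)" using S0 by (simp only: of_nat_le_iff)
  then have "real (card Sm) \<le> real n ^ 2 * 2 ^ m" by simp
  then have S: "real (card Sm) \<le> real n ^ m / 4" using h1 by linarith
  have cov: "\<Omega> \<subseteq> Good \<union> Fl \<union> Sm" unfolding Good_def by blast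
  have finGFS: "finite (Good \<union> Fl \<union> Sm)" unfolding Good_def Fl_def Sm_def using finO by simp
  have "card \<Omega> \<le> card (Good \<union> Fl \<union> Sm)" by (rule card_mono[OF finGFS cov])
  also have "\<dots> \<le> card Good + card Fl + card Sm" by (meson add_le_mono card_Un_le dual_order.trans le_refl)
  finally have "real (card \<Omega>) \<le> real (card Good) + real (card Fl) + real (card Sm)" by linarith
  then have low: "real n ^ m / 2 \<le> real (card Good)" using F S cO by simp
  have finG: "finite G"
  proof -
    have "G \<subseteq> Pow P" unfolding G_def triangles_def by blast
    then show ?thesis using finP by (meson finite_Pow_iff rev_finite_subset)
  qed
  have sub: "Good \<subseteq> (\<Union>T\<in>G. {x \<in> \<Omega>. T \<subseteq> x ` {..<m}})"
  proof (rule subsetI)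
    fix x assume x: "x \<in> Good"
    then have xO: "x \<in> \<Omega>" and xF: "x \<notin> Fl" and xS: "x \<notin> Sm" unfolding Good_def by blast+
    define M where "M = x ` {..<m}"
    have finM: "finite M" unfolding M_def by simp
    have MP: "M \<subseteq> P" using xO unfolding M_def \<Omega>_def by (auto simp: PiE_iff)
    have c3: "3 \<le> card M" using xS xO unfolding Sm_def M_def by simp
    have upM: "\<forall>p\<in>M. p$3 > 0" using MP up by blast
    have cM: "c \<in> convex hull M"
    proof (rule ccontr)
      assume nc: "c \<notin> convex hull M"
      have "closed (convex hull M)" using finM by (simp add: compact_imp_closed finite_imp_compact_convex_hull)
      then obtain a b where ab: "inner a c < b" "\<forall>z\<in>convex hull M. inner a z > b"
        using separating_hyperplane_closed_point[OF convex_convex_hull _ nc] by blast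
      have x0: "x 0 \<in> convex hull M" unfolding M_def using m0 by (intro hull_inc) simp
      have a0: "a \<noteq> 0"
      proof
        assume "a = 0"
        then show False using ab x0 by simp
      qed
      have "\<forall>i<m. inner a (x i) > inner a c"
      proof (intro allI impI)
        fix i assume "i < m"
        then have "x i \<in> convex hull M" unfolding M_def by (intro hull_inc) simp
        then show "inner a (x i) > inner a c" using ab by force
      qed
      then have "x \<in> Fl" unfolding Fl_def using xO a0 by blast
      then show False using xF by blast
    qed
    obtain T where T: "T \<subseteq> M" "card T = 3" "convex hull T \<inter> closed_segment c r \<noteq> {}"
      using tri_exists[OF finM c3 cM upM r0] by blast
    have "T \<in> G" unfolding G_def triangles_def using T MP by blast
    moreover have "x \<in> {x \<in> \<Omega>. T \<subseteq> x ` {..<m}}" using xO T(1) unfolding M_def by blast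
    ultimately show "x \<in> (\<Union>T\<in>G. {x \<in> \<Omega>. T \<subseteq> x ` {..<m}})" by blast
  qed
  have "card Good \<le> card (\<Union>T\<in>G. {x \<in> \<Omega>. T \<subseteq> x ` {..<m}})"
  proof (rule card_mono[OF _ sub])
    show "finite (\<Union>T\<in>G. {x \<in> \<Omega>. T \<subseteq> x ` {..<m}})" using finG finO by simp
  qed
  also have "\<dots> \<le> (\<Sum>T\<in>G. card {x \<in> \<Omega>. T \<subseteq> x ` {..<m}})" by (rule card_UN_le[OF finG])
  also have "\<dots> \<le> (\<Sum>T\<in>G. m^3 * n ^ (m - 3))"
  proof (rule sum_mono)
    fix T assume "T \<in> G"
    then have "T \<subseteq> P" "card T = 3" unfolding G_def triangles_def by blast+
    then show "card {x \<in> \<Omega>. T \<subseteq> x ` {..<m}} \<le> m^3 * n ^ (m - 3)"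
      unfolding \<Omega>_def n_def by (rule card_contains3[OF finP])
  qed
  also have "\<dots> = card G * (m^3 * n ^ (m - 3))" by simp
  finally have "real (card Good) \<le> real (card G * (m^3 * n ^ (m - 3)))" by (simp only: of_nat_le_iff)
  with low have "real n ^ m / 2 \<le> real (card G) * real m ^ 3 * real n ^ (m - 3)" by simp
  moreover have "real n ^ m = real n ^ 3 * real n ^ (m - 3)" unfolding m_def by (simp flip: power_add)
  ultimately have "(real n ^ 3 / 2) * real n ^ (m - 3) \<le> (real (card G) * real m ^ 3) * real n ^ (m - 3)"
    by simp
  then have "real n ^ 3 / 2 \<le> real (card G) * real m ^ 3"
    using n0 by (simp only: mult_le_cancel_right_pos zero_less_power)
  then show ?thesis unfolding n_def G_def m_def by simp
qed

theorem lemma2p16: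
  shows "\<exists>C::real. C > 0 \<and> (\<exists>N::nat. \<forall>(P::(real^3) set) (c::real^3) (r::real^3).
            finite P \<longrightarrow> card P \<ge> N \<longrightarrow>
            (\<forall>p\<in>P. p $ 3 > 0) \<longrightarrow> centerpoint P c \<longrightarrow> r $ 3 = 0 \<longrightarrow>
            real (card {S \<in> triangles P. convex hull S \<inter> closed_segment c r \<noteq> {}})
              \<ge> C * real (card P) ^ 3)"
proof (rule exI[of _ "1 / (2 * 512^3)"], rule conjI)
  show "(0::real) < 1 / (2 * 512^3)" by simp
  show "\<exists>N::nat. \<forall>(P::(real^3) set) (c::real^3) (r::real^3).
            finite P \<longrightarrow> card P \<ge> N \<longrightarrow>
            (\<forall>p\<in>P. p $ 3 > 0) \<longrightarrow> centerpoint P c \<longrightarrow> r $ 3 = 0 \<longrightarrow>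
            real (card {S \<in> triangles P. convex hull S \<inter> closed_segment c r \<noteq> {}})
              \<ge> 1 / (2 * 512^3) * real (card P) ^ 3"
  proof (rule exI[of _ 4], intro allI impI)
    fix P :: "(real^3) set" and c r :: "real^3"
    assume "finite P" "4 \<le> card P" "\<forall>p\<in>P. p $ 3 > 0" "centerpoint P c" "r $ 3 = 0"
    then have "real (card P) ^ 3 \<le> real (card {S \<in> triangles P. convex hull S \<inter> closed_segment c r \<noteq> {}}) * (2 * 512^3)"
      by (rule main_bound)
    then show "1 / (2 * 512^3) * real (card P) ^ 3 \<le> real (card {S \<in> triangles P. convex hull S \<inter> closed_segment c r \<noteq> {}})"
      by (simp add: field_simps)
  qed
qed

end
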